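(* Let $0\le\theta\le1$. (i) If $0\le\theta\le1/3$, then for every $\epsilon>0$ there exists a weighted digraph $D$ with $w(D)>0$ and $\theta(D)=\theta$ such that $\mathrm{mac}(D)<(1+\epsilon)\,l(\theta)\,w(D)$. (ii) If $1/3<\theta\le1$, then there exists a weighted digraph $D$ with $w(D)>0$ and $\theta(D)=\theta$ such that $\mathrm{mac}(D)=\theta\cdot w(D)$ $(=l(\theta)w(D))$.
   Context: A weighted digraph $D=(V,A,w)$ is a digraph without loops or parallel arcs (opposite arcs allowed) with weights $w:A\to\mathbb{R}_{\ge0}$; $w(D)$ is the total arc weight. For a partition $(X,Y)$ of $V$, $w(X,Y)$ is the total weight of arcs from $X$ to $Y$, and $\mathrm{mac}(D)=\max_{(X,Y)}w(X,Y)$. For $v\in V$, $r(v)=w^+(v)-w^-(v)$ (total weight leaving minus total weight entering $v$); $r^+(D)=\sum_{r(x)>0}r(x)$; $\theta(D)=r^+(D)/w(D)$. For $0\le\theta\le1$, $l(\theta)=\frac14+\frac{\theta^2}{4(1-2\theta)}$ if $\theta<1/3$ and $l(\theta)=\theta$ if $\theta\ge1/3$. *)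

theory Defs
  imports Complex_Main
begin

text \<open>A weighted digraph on vertex set V (finite, vertices drawn from nat): weights
 w u v \<ge> 0 for ordered pairs of distinct vertices of V (an arc of weight 0 is the same as
 no arc; opposite arcs allowed, no loops, no parallel arcs).\<close>

definition weighted_digraph :: "nat set \<Rightarrow> (nat \<Rightarrow> nat \<Rightarrow> real) \<Rightarrow> bool" where
  "weighted_digraph V w \<longleftrightarrow> finite V \<and>
     (\<forall>u v. (u \<in> V \<and> v \<in> V \<and> u \<noteq> v \<longrightarrow> w u v \<ge> 0) \<and>
            (\<not> (u \<in> V \<and> v \<in> V \<and> u \<noteq> v) \<longrightarrow> w u v = 0))"

definition arcs :: "nat set \<Rightarrow> (nat \<times> nat) set" where
  "arcs V = {(u, v). u \<in> V \<and> v \<in> V \<and> u \<noteq> v}"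

definition total_weight :: "nat set \<Rightarrow> (nat \<Rightarrow> nat \<Rightarrow> real) \<Rightarrow> real" where
  "total_weight V w = (\<Sum>(u, v)\<in>arcs V. w u v)"

definition cut_weight :: "nat set \<Rightarrow> (nat \<Rightarrow> nat \<Rightarrow> real) \<Rightarrow> nat set \<Rightarrow> real" where
  "cut_weight V w X = (\<Sum>u\<in>X. \<Sum>v\<in>V - X. w u v)"

definition mac :: "nat set \<Rightarrow> (nat \<Rightarrow> nat \<Rightarrow> real) \<Rightarrow> real" where
  "mac V w = Max ((\<lambda>X. cut_weight V w X) ` Pow V)"

definition outw :: "nat set \<Rightarrow> (nat \<Rightarrow> nat \<Rightarrow> real) \<Rightarrow> nat \<Rightarrow> real" where
  "outw V w x = (\<Sum>y\<in>V - {x}. w x y)"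

definition inw :: "nat set \<Rightarrow> (nat \<Rightarrow> nat \<Rightarrow> real) \<Rightarrow> nat \<Rightarrow> real" where
  "inw V w x = (\<Sum>y\<in>V - {x}. w y x)"

definition rdiff :: "nat set \<Rightarrow> (nat \<Rightarrow> nat \<Rightarrow> real) \<Rightarrow> nat \<Rightarrow> real" where
  "rdiff V w x = outw V w x - inw V w x"

definition rplus :: "nat set \<Rightarrow> (nat \<Rightarrow> nat \<Rightarrow> real) \<Rightarrow> real" where
  "rplus V w = (\<Sum>x\<in>{x\<in>V. rdiff V w x > 0}. rdiff V w x)"

definition theta :: "nat set \<Rightarrow> (nat \<Rightarrow> nat \<Rightarrow> real) \<Rightarrow> real" where
  "theta V w = rplus V w / total_weight V w"

definition lfun :: "real \<Rightarrow> real" where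
  "lfun t = (if t < 1/3 then 1/4 + t^2 / (4 * (1 - 2*t)) else t)"

end

theory Submission
  imports Defs
begin

lemma poly2:
  fixes a b n l :: real
  assumes "0 \<le> a" "a \<le> n" "0 \<le> b" "b \<le> n" "0 \<le> l" "l \<le> 1"
  shows "l * (a*(n-a)) + l*(b*(n-b)) + a*(n-b) \<le> n^2"
proof -
  have h1: "l * (a*(n-a)) \<le> a*(n-a)" using assms by (intro mult_left_le_one_le) auto
  have h2: "l * (b*(n-b)) \<le> b*(n-b)" using assms by (intro mult_left_le_one_le) auto
  have "n^2 - (a*(n-a) + b*(n-b) + a*(n-b)) = ((n-a) - b/2)^2 + 3*b^2/4"
    by (simp add: algebra_simps power2_eq_square)
  moreover have "((n-a) - b/2)^2 + 3*b^2/4 \<ge> 0" by simp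
  ultimately show ?thesis using h1 h2 by linarith
qed

lemma poly1:
  fixes a b n t :: real
  assumes "0 \<le> t" "t \<le> 1/3"
  shows "(1-t)*(a*(n-a)+b*(n-b)) + 2*t*(a*(n-b)) \<le> 2*n^2 * ((1-t)^2/(4*(1-2*t)))"
proof -
  define d where "d = 1 - 2*t"
  have d: "d > 0" using assms by (simp add: d_def)
  define U where "U = 2*d*a-(1-t)*n"
  define V where "V = 2*d*b-2*d*n+(1-t)*n"
  let ?F = "(1-t)*(a*(n-a)+b*(n-b)) + 2*t*(a*(n-b))"
  have id: "2*(d*(1-t)^2*n^2-2*d^2*?F) = t*(U+V)^2+d*(U^2+V^2)"
    unfolding U_def V_def d_def by (simp add: algebra_simps power2_eq_square)
  have "t*(U+V)^2+d*(U^2+V^2) \<ge> 0" using d assms by simp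
  hence "0 \<le> 2*(d*(1-t)^2*n^2-2*d^2*?F)" using id by simp
  hence "2*d^2*?F \<le> d*(1-t)^2*n^2" by (simp add: mult_ac)
  hence "?F \<le> d*(1-t)^2*n^2 / (2*d^2)" using d by (simp add: field_simps)
  also have "\<dots> = 2*n^2 * ((1-t)^2/(4*d))" using d by (simp add: field_simps power2_eq_square)
  finally show ?thesis by (simp add: d_def)
qed

definition gw :: "nat \<Rightarrow> real \<Rightarrow> real \<Rightarrow> nat \<Rightarrow> nat \<Rightarrow> real" where
  "gw n \<alpha> \<gamma> u v = (if u < 2*n \<and> v < 2*n \<and> u \<noteq> v then
      (if (u < n) = (v < n) then \<alpha> else if u < n then \<gamma> else 0) else 0)"

lemma gw_digraph: "\<alpha> \<ge> 0 \<Longrightarrow> \<gamma> \<ge> 0 \<Longrightarrow> weighted_digraph {..<2*n} (gw n \<alpha> \<gamma>)"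
  unfolding weighted_digraph_def gw_def by auto

lemma sum_const_on:
  assumes "\<And>x. x \<in> S \<Longrightarrow> f x = c"
  shows "sum f S = real (card S) * c"
  using assms by simp

lemma cut_gw:
  assumes Z: "Z \<subseteq> {..<2*n}"
  shows "cut_weight {..<2*n} (gw n \<alpha> \<gamma>) Z =
     \<alpha> * (real (card (Z \<inter> {..<n})) * (n - real (card (Z \<inter> {..<n}))))
   + \<alpha> * (real (card (Z \<inter> {n..<2*n})) * (n - real (card (Z \<inter> {n..<2*n}))))
   + \<gamma> * (real (card (Z \<inter> {..<n})) * (n - real (card (Z \<inter> {n..<2*n}))))"
proof -
  let ?X = "{..<n}" and ?Y = "{n..<2*n}" and ?V = "{..<2*n}"
  define a where "a = card (Z \<inter> ?X)"
  define b where "b = card (Z \<inter> ?Y)"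
  have fin: "finite Z" using Z finite_subset by blast
  have cX: "card (?X - Z) = n - a" unfolding a_def
    by (metis Diff_Diff_Int card_Diff_subset_Int card_lessThan finite_Int finite_lessThan inf_commute)
  have aX: "a \<le> n" unfolding a_def by (metis card_lessThan card_mono finite_lessThan inf_le2)
  have cY: "card (?Y - Z) = n - b" unfolding b_def
    by (metis Diff_Diff_Int card_Diff_subset_Int card_atLeastLessThan finite_Int finite_atLeastLessThan inf_commute diff_add_inverse2 mult_2)
  have bY: "b \<le> n" unfolding b_def
    by (metis card_atLeastLessThan card_mono finite_atLeastLessThan inf_le2 mult_2 diff_add_inverse2)
  have VZ: "?V - Z = (?X - Z) \<union> (?Y - Z)" by auto
  have disj: "(?X - Z) \<inter> (?Y - Z) = {}" by auto
  have inner: "(\<Sum>v\<in>?V - Z. gw n \<alpha> \<gamma> u v) =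
      (\<Sum>v\<in>?X - Z. gw n \<alpha> \<gamma> u v) + (\<Sum>v\<in>?Y - Z. gw n \<alpha> \<gamma> u v)" for u
    unfolding VZ by (rule sum.union_disjoint) (use disj in auto)
  have uX: "(\<Sum>v\<in>?V - Z. gw n \<alpha> \<gamma> u v) = \<alpha> * (n - real a) + \<gamma> * (n - real b)"
    if "u \<in> Z" "u < n" for u
  proof -
    have "(\<Sum>v\<in>?X - Z. gw n \<alpha> \<gamma> u v) = real (card (?X - Z)) * \<alpha>"
      by (rule sum_const_on) (use that in \<open>auto simp: gw_def\<close>)
    moreover have "(\<Sum>v\<in>?Y - Z. gw n \<alpha> \<gamma> u v) = real (card (?Y - Z)) * \<gamma>"
      by (rule sum_const_on) (use that in \<open>auto simp: gw_def\<close>)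
    ultimately show ?thesis using inner cX cY aX bY by (simp add: of_nat_diff mult.commute)
  qed
  have uY: "(\<Sum>v\<in>?V - Z. gw n \<alpha> \<gamma> u v) = \<alpha> * (n - real b)"
    if "u \<in> Z" "\<not> u < n" for u
  proof -
    have "u < 2*n" using that Z by auto
    have "(\<Sum>v\<in>?X - Z. gw n \<alpha> \<gamma> u v) = real (card (?X - Z)) * 0"
      by (rule sum_const_on) (use that in \<open>auto simp: gw_def\<close>)
    moreover have "(\<Sum>v\<in>?Y - Z. gw n \<alpha> \<gamma> u v) = real (card (?Y - Z)) * \<alpha>"
      by (rule sum_const_on) (use that \<open>u < 2*n\<close> in \<open>auto simp: gw_def\<close>)
    ultimately show ?thesis using inner cY bY by (simp add: of_nat_diff mult.commute)
  qed
  have ZZ: "Z = (Z \<inter> ?X) \<union> (Z \<inter> ?Y)" using Z by auto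
  have "cut_weight ?V (gw n \<alpha> \<gamma>) Z = (\<Sum>u\<in>Z. \<Sum>v\<in>?V - Z. gw n \<alpha> \<gamma> u v)"
    unfolding cut_weight_def by simp
  also have "\<dots> = (\<Sum>u\<in>Z \<inter> ?X. \<Sum>v\<in>?V - Z. gw n \<alpha> \<gamma> u v) + (\<Sum>u\<in>Z \<inter> ?Y. \<Sum>v\<in>?V - Z. gw n \<alpha> \<gamma> u v)"
    by (subst ZZ, rule sum.union_disjoint) (use fin in auto)
  also have "(\<Sum>u\<in>Z \<inter> ?X. \<Sum>v\<in>?V - Z. gw n \<alpha> \<gamma> u v) = real a * (\<alpha> * (n - real a) + \<gamma> * (n - real b))"
    using uX unfolding a_def by (intro sum_const_on) auto
  also have "(\<Sum>u\<in>Z \<inter> ?Y. \<Sum>v\<in>?V - Z. gw n \<alpha> \<gamma> u v) = real b * (\<alpha> * (n - real b))"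
    using uY unfolding b_def by (intro sum_const_on) auto
  finally show ?thesis unfolding a_def[symmetric] b_def[symmetric] by (simp add: algebra_simps)
qed

lemma cardZX: "card (Z \<inter> {..<n}) \<le> n"
  by (metis card_lessThan card_mono finite_lessThan inf_le2)
lemma cardZY: "card (Z \<inter> {n..<2*n}) \<le> n"
  by (metis card_atLeastLessThan card_mono finite_atLeastLessThan inf_le2 mult_2 diff_add_inverse2)

lemma outw_cut: "outw V w x = cut_weight V w {x}"
  unfolding outw_def cut_weight_def by simp

lemma inw_cut: "x \<in> V \<Longrightarrow> inw V w x = cut_weight V w (V - {x})"
  unfolding inw_def cut_weight_def
proof -
  assume "x \<in> V"
  hence "V - (V - {x}) = {x}" by auto
  thus "(\<Sum>y\<in>V - {x}. w y x) = (\<Sum>u\<in>V - {x}. sum (w u) (V - (V - {x})))" by simp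
qed

lemma outw_X: "x < n \<Longrightarrow> outw {..<2*n} (gw n \<alpha> \<gamma>) x = \<alpha> * (real n - 1) + \<gamma> * n"
proof -
  assume x: "x < n"
  have c1: "{x} \<inter> {..<n} = {x}" "{x} \<inter> {n..<2*n} = {}" using x by auto
  have "{x} \<subseteq> {..<2*n}" using x by auto
  note h = cut_gw[OF this, of \<alpha> \<gamma>]
  show ?thesis unfolding outw_cut h c1 by simp
qed

lemma outw_Y: "n \<le> x \<Longrightarrow> x < 2*n \<Longrightarrow> outw {..<2*n} (gw n \<alpha> \<gamma>) x = \<alpha> * (real n - 1)"
proof -
  assume x: "n \<le> x" "x < 2*n"
  have c1: "{x} \<inter> {..<n} = {}" "{x} \<inter> {n..<2*n} = {x}" using x by auto
  have "{x} \<subseteq> {..<2*n}" using x by auto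
  note h = cut_gw[OF this, of \<alpha> \<gamma>]
  show ?thesis unfolding outw_cut h c1 by simp
qed

lemma inw_X:
  assumes "x < n"
  shows "inw {..<2*n} (gw n \<alpha> \<gamma>) x = \<alpha> * (real n - 1)"
proof -
  have c2: "({..<2*n} - {x}) \<inter> {..<n} = {..<n} - {x}" "({..<2*n} - {x}) \<inter> {n..<2*n} = {n..<2*n}" using assms by auto
  have "card ({..<n} - {x}) = n - 1" using assms by simp
  moreover have "n \<ge> 1" using assms by simp
  ultimately have cc: "real (card ({..<n} - {x})) = real n - 1" by (simp add: of_nat_diff)
  have x: "x \<in> {..<2*n}" using assms by simp
  have sub: "{..<2*n} - {x} \<subseteq> {..<2*n}" by auto
  note h = cut_gw[OF sub, of \<alpha> \<gamma>]
  show ?thesis unfolding inw_cut[OF x] h c2 cc by (simp add: algebra_simps)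
qed

lemma inw_Y:
  assumes "n \<le> x" "x < 2*n"
  shows "inw {..<2*n} (gw n \<alpha> \<gamma>) x = \<alpha> * (real n - 1) + \<gamma> * n"
proof -
  have c2: "({..<2*n} - {x}) \<inter> {..<n} = {..<n}" "({..<2*n} - {x}) \<inter> {n..<2*n} = {n..<2*n} - {x}" using assms by auto
  have "card ({n..<2*n} - {x}) = n - 1" using assms by simp
  moreover have "n \<ge> 1" using assms by simp
  ultimately have cc: "real (card ({n..<2*n} - {x})) = real n - 1" by (simp add: of_nat_diff)
  have x: "x \<in> {..<2*n}" using assms by simp
  have sub: "{..<2*n} - {x} \<subseteq> {..<2*n}" by auto
  note h = cut_gw[OF sub, of \<alpha> \<gamma>]
  show ?thesis unfolding inw_cut[OF x] h c2 cc by (simp add: algebra_simps)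
qed

lemma rdiff_X: "x < n \<Longrightarrow> rdiff {..<2*n} (gw n \<alpha> \<gamma>) x = \<gamma> * n"
  unfolding rdiff_def by (simp add: outw_X inw_X)

lemma rdiff_Y: "n \<le> x \<Longrightarrow> x < 2*n \<Longrightarrow> rdiff {..<2*n} (gw n \<alpha> \<gamma>) x = - \<gamma> * n"
  unfolding rdiff_def by (simp add: outw_Y inw_Y)

lemma total_gw: "total_weight {..<2*n} (gw n \<alpha> \<gamma>) = 2 * n * \<alpha> * (real n - 1) + \<gamma> * n^2"
proof -
  let ?V = "{..<2*n}"
  have A: "arcs ?V = Sigma ?V (\<lambda>u. ?V - {u})" unfolding arcs_def by auto
  have "total_weight ?V (gw n \<alpha> \<gamma>) = (\<Sum>u\<in>?V. \<Sum>v\<in>?V - {u}. gw n \<alpha> \<gamma> u v)"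
    unfolding total_weight_def A by (subst sum.Sigma) auto
  also have "\<dots> = (\<Sum>u\<in>?V. outw ?V (gw n \<alpha> \<gamma>) u)" unfolding outw_def by simp
  also have "\<dots> =
     (\<Sum>u\<in>{..<n}. outw ?V (gw n \<alpha> \<gamma>) u) + (\<Sum>u\<in>{n..<2*n}. outw ?V (gw n \<alpha> \<gamma>) u)"
  proof -
    have "(\<Sum>u\<in>?V. outw ?V (gw n \<alpha> \<gamma>) u) = (\<Sum>u\<in>{..<n} \<union> {n..<2*n}. outw ?V (gw n \<alpha> \<gamma>) u)"
      by (intro sum.cong) auto
    also have "\<dots> = (\<Sum>u\<in>{..<n}. outw ?V (gw n \<alpha> \<gamma>) u) + (\<Sum>u\<in>{n..<2*n}. outw ?V (gw n \<alpha> \<gamma>) u)"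
      by (rule sum.union_disjoint) auto
    finally show ?thesis .
  qed
  also have "(\<Sum>u\<in>{..<n}. outw ?V (gw n \<alpha> \<gamma>) u) = real n * (\<alpha> * (real n - 1) + \<gamma> * n)"
    using outw_X[of _ n] by (subst sum_const_on[where c="\<alpha> * (real n - 1) + \<gamma> * n"]) auto
  also have "(\<Sum>u\<in>{n..<2*n}. outw ?V (gw n \<alpha> \<gamma>) u) = real n * (\<alpha> * (real n - 1))"
    using outw_Y[of n] by (subst sum_const_on[where c="\<alpha> * (real n - 1)"]) auto
  finally show ?thesis by (simp add: algebra_simps power2_eq_square)
qed

lemma rplus_gw:
  assumes "\<gamma> \<ge> 0" "n \<ge> 1"
  shows "rplus {..<2*n} (gw n \<alpha> \<gamma>) = \<gamma> * n^2"
proof (cases "\<gamma> = 0")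
  case True
  have E: "{x \<in> {..<2*n}. rdiff {..<2*n} (gw n \<alpha> \<gamma>) x > 0} = {}"
  proof -
    have "rdiff {..<2*n} (gw n \<alpha> \<gamma>) x = 0" if "x < 2*n" for x
    proof (cases "x < n")
      case True thus ?thesis using rdiff_X[of x n \<alpha> \<gamma>] \<open>\<gamma> = 0\<close> by simp
    next
      case False thus ?thesis using rdiff_Y[of n x \<alpha> \<gamma>] \<open>\<gamma> = 0\<close> that by simp
    qed
    thus ?thesis by auto
  qed
  show ?thesis unfolding rplus_def E using True by simp
next
  case False
  hence g: "\<gamma> > 0" using assms by simp
  have "{x \<in> {..<2*n}. rdiff {..<2*n} (gw n \<alpha> \<gamma>) x > 0} = {..<n}"
  proof (auto)
    fix x assume "x < 2*n" and "0 < rdiff {..<2*n} (gw n \<alpha> \<gamma>) x"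
    show "x < n"
    proof (rule ccontr)
      assume "\<not> x < n"
      hence "rdiff {..<2*n} (gw n \<alpha> \<gamma>) x = - \<gamma> * n" using rdiff_Y \<open>x < 2*n\<close> by simp
      moreover have "\<gamma> * real n \<ge> 0" using g by simp
      ultimately show False using \<open>0 < rdiff {..<2*n} (gw n \<alpha> \<gamma>) x\<close> by simp
    qed
  next
    fix x assume "x < n"
    thus "0 < rdiff {..<2*n} (gw n \<alpha> \<gamma>) x" using rdiff_X g by simp
  qed
  hence "rplus {..<2*n} (gw n \<alpha> \<gamma>) = (\<Sum>x\<in>{..<n}. rdiff {..<2*n} (gw n \<alpha> \<gamma>) x)"
    unfolding rplus_def by simp
  also have "\<dots> = real n * (\<gamma> * n)" using rdiff_X[of _ n \<alpha> \<gamma>] by (subst sum_const_on[where c="\<gamma> * n"]) auto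
  finally show ?thesis by (simp add: power2_eq_square)
qed

lemma mac_le:
  assumes "\<And>a b. a \<le> n \<Longrightarrow> b \<le> n \<Longrightarrow>
      \<alpha> * (real a * (n - real a)) + \<alpha> * (real b * (n - real b)) + \<gamma> * (real a * (n - real b)) \<le> M"
  shows "mac {..<2*n} (gw n \<alpha> \<gamma>) \<le> M"
  unfolding mac_def
proof (subst Max_le_iff)
  show "\<forall>x\<in>cut_weight {..<2 * n} (gw n \<alpha> \<gamma>) ` Pow {..<2 * n}. x \<le> M"
    using assms cardZX cardZY by (auto simp: cut_gw)
qed auto

lemma mac_ge: "cut_weight {..<2*n} (gw n \<alpha> \<gamma>) {..<n} \<le> mac {..<2*n} (gw n \<alpha> \<gamma>)"
  unfolding mac_def by (rule Max_ge) auto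

lemma cut_X: "cut_weight {..<2*n} (gw n \<alpha> \<gamma>) {..<n} = \<gamma> * n^2"
proof -
  have "{..<n} \<inter> {..<n} = {..<n}" "{..<n} \<inter> {n..<2*n} = {}" by auto
  thus ?thesis by (subst cut_gw) (auto simp: power2_eq_square)
qed


theorem mainTheorem8:
  fixes \<theta> :: real
  assumes "0 \<le> \<theta>" and "\<theta> \<le> 1"
  shows "(\<theta> \<le> 1/3 \<longrightarrow>
           (\<forall>\<epsilon>>0. \<exists>V w. weighted_digraph V w \<and> total_weight V w > 0 \<and>
                theta V w = \<theta> \<and> mac V w < (1 + \<epsilon>) * lfun \<theta> * total_weight V w))
       \<and> (1/3 < \<theta> \<longrightarrow>
           (\<exists>V w. weighted_digraph V w \<and> total_weight V w > 0 \<and>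
                theta V w = \<theta> \<and> mac V w = \<theta> * total_weight V w))"
proof (intro conjI impI allI)
  fix \<epsilon> :: real
  assume t3: "\<theta> \<le> 1/3" and e: "\<epsilon> > 0"
  obtain n :: nat where nbig: "real n > (1+\<epsilon>)/\<epsilon> + 2" using reals_Archimedean2 by blast
  have n2: "n \<ge> 2"
  proof -
    have "(1+\<epsilon>)/\<epsilon> > 0" using e by simp
    hence "real n > 2" using nbig by linarith
    thus ?thesis by simp
  qed
  define L where "L = (1-\<theta>)^2/(4*(1-2*\<theta>))"
  have Lpos: "L > 0" unfolding L_def using t3 by simp
  have lf: "lfun \<theta> = L"
  proof (cases "\<theta> < 1/3")
    case True
    hence dd: "1 - 2*\<theta> > 0" by simp
    have "1/4 + \<theta>^2 / (4*(1-2*\<theta>)) = (1-\<theta>)^2/(4*(1-2*\<theta>))"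
      using dd by (simp add: field_simps power2_eq_square)
    thus ?thesis unfolding lfun_def L_def using True by simp
  next
    case False
    hence e3: "\<theta> = 1/3" using t3 by simp
    have "lfun \<theta> = \<theta>" unfolding lfun_def using False by simp
    moreover have "L = 1/3" unfolding L_def e3 by (simp add: power2_eq_square)
    ultimately show ?thesis using e3 by linarith
  qed
  define \<alpha> where "\<alpha> = 1 - \<theta>"
  define \<gamma> where "\<gamma> = 2*\<theta>*(real n - 1)/real n"
  have npos: "real n > 0" using n2 by simp
  have a0: "\<alpha> \<ge> 0" unfolding \<alpha>_def using assms by simp
  have g0: "\<gamma> \<ge> 0" unfolding \<gamma>_def using assms n2 by simp
  have g2: "\<gamma> \<le> 2*\<theta>" unfolding \<gamma>_def using assms npos by (simp add: field_simps)
  have gn: "\<gamma> * real n = 2*\<theta>*(real n - 1)" unfolding \<gamma>_def using npos by simp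
  let ?V = "{..<2*n}" and ?w = "gw n \<alpha> \<gamma>"
  have "\<gamma> * (real n)^2 = 2*\<theta>*(real n - 1) * real n"
    using gn by (simp add: power2_eq_square mult.assoc[symmetric])
  hence tw: "total_weight ?V ?w = 2 * n * (real n - 1)"
    unfolding total_gw \<alpha>_def of_nat_power by (simp add: algebra_simps)
  have twpos: "total_weight ?V ?w > 0" unfolding tw using n2 by simp
  have rp: "rplus ?V ?w = 2*\<theta>*(real n - 1) * n"
    using rplus_gw[OF g0, of n \<alpha>] n2 \<open>\<gamma> * (real n)^2 = 2*\<theta>*(real n - 1) * real n\<close> by simp
  have th: "theta ?V ?w = \<theta>" unfolding theta_def rp tw using n2 by (simp add: field_simps)
  have macb: "mac ?V ?w \<le> 2*(real n)^2 * L"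
  proof (rule mac_le)
    fix a b :: nat assume "a \<le> n" "b \<le> n"
    hence ab: "real a * (real n - real b) \<ge> 0" by simp
    have "\<gamma> * (real a * (real n - real b)) \<le> 2*\<theta> * (real a * (real n - real b))"
      using g2 ab by (rule mult_right_mono)
    moreover have "(1-\<theta>)*(real a*(real n-real a)+real b*(real n-real b)) + 2*\<theta>*(real a*(real n-real b)) \<le> 2*(real n)^2 * L"
      unfolding L_def using poly1 assms t3 by blast
    ultimately show "\<alpha> * (real a * (real n - real a)) + \<alpha> * (real b * (real n - real b)) +
        \<gamma> * (real a * (real n - real b)) \<le> 2 * (real n)\<^sup>2 * L"
      unfolding \<alpha>_def by (simp add: algebra_simps)
  qed
  have "(1+\<epsilon>) < \<epsilon> * (real n - 1)"
  proof -
    have "(1+\<epsilon>)/\<epsilon> < real n - 2" using nbig by linarith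
    have "1+\<epsilon> = ((1+\<epsilon>)/\<epsilon>)*\<epsilon>" using e by simp
    also have "\<dots> < (real n - 2)*\<epsilon>" using \<open>(1+\<epsilon>)/\<epsilon> < real n - 2\<close> e by (rule mult_strict_right_mono)
    finally have "1+\<epsilon> < (real n - 2)*\<epsilon>" .
    moreover have "\<epsilon>*(real n-1) = (real n - 2)*\<epsilon> + \<epsilon>" by (simp add: algebra_simps)
    ultimately show ?thesis using e by linarith
  qed
  moreover have "(1+\<epsilon>) * (real n - 1) = real n - 1 + \<epsilon> * (real n - 1)" by (simp add: algebra_simps)
  ultimately have "real n < (1+\<epsilon>) * (real n - 1)" using e by linarith
  hence "2*real n*L * real n < 2*real n*L*((1+\<epsilon>)*(real n-1))"
    by (rule mult_strict_left_mono) (use Lpos npos in simp)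
  moreover have "2*(real n)^2 * L = 2*real n*L * real n" by (simp add: power2_eq_square)
  moreover have "(1+\<epsilon>) * L * (2 * n * (real n - 1)) = 2*real n*L*((1+\<epsilon>)*(real n-1))" by simp
  ultimately have "2*(real n)^2 * L < (1+\<epsilon>) * L * (2 * n * (real n - 1))" by linarith
  hence "mac ?V ?w < (1 + \<epsilon>) * lfun \<theta> * total_weight ?V ?w"
    using macb unfolding lf tw by linarith
  thus "\<exists>V w. weighted_digraph V w \<and> total_weight V w > 0 \<and>
                theta V w = \<theta> \<and> mac V w < (1 + \<epsilon>) * lfun \<theta> * total_weight V w"
    using gw_digraph[OF a0 g0, of n] twpos th by blast
next
  assume t3: "1/3 < \<theta>"
  obtain n :: nat where nbig: "real n > 2*\<theta>/(3*\<theta>-1) + 2" using reals_Archimedean2 by blast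
  have d: "3*\<theta>-1 > 0" using t3 by simp
  have n2: "n \<ge> 2"
  proof -
    have "2*\<theta>/(3*\<theta>-1) \<ge> 0" using d assms by simp
    hence "real n > 2" using nbig by linarith
    thus ?thesis by simp
  qed
  have npos: "real n > 0" "real n - 1 > 0" using n2 by auto
  have tpos: "\<theta> > 0" using t3 by simp
  define lam where "lam = real n * (1-\<theta>)/(2*\<theta>*(real n - 1))"
  have l0: "lam \<ge> 0" unfolding lam_def using assms npos by simp
  have "2*\<theta> < real n * (3*\<theta>-1)"
  proof -
    have "2*\<theta>/(3*\<theta>-1) < real n" using nbig by linarith
    thus ?thesis using d by (simp add: field_simps)
  qed
  hence l1: "lam \<le> 1" unfolding lam_def using npos tpos by (simp add: field_simps)
  have ln: "2 * real n * lam * (real n - 1) = (real n)^2 * (1-\<theta>)/\<theta>"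
    unfolding lam_def using npos tpos by (simp add: field_simps power2_eq_square)
  let ?V = "{..<2*n}" and ?w = "gw n lam 1"
  have tw: "total_weight ?V ?w = (real n)^2 / \<theta>"
    unfolding total_gw using ln tpos by (simp add: field_simps)
  have twpos: "total_weight ?V ?w > 0" unfolding tw using npos tpos by simp
  have rp: "rplus ?V ?w = (real n)^2"
    using rplus_gw[of 1 n lam] n2 by simp
  have th: "theta ?V ?w = \<theta>" unfolding theta_def rp tw using npos tpos by simp
  have m1: "mac ?V ?w \<le> (real n)^2"
  proof (rule mac_le)
    fix a b :: nat assume "a \<le> n" "b \<le> n"
    thus "lam * (real a * (real n - real a)) + lam * (real b * (real n - real b)) +
        1 * (real a * (real n - real b)) \<le> (real n)\<^sup>2"
      using poly2[of "real a" "real n" "real b" lam] l0 l1 by simp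
  qed
  have m2: "(real n)^2 \<le> mac ?V ?w" using mac_ge[of n lam 1] cut_X[of n lam 1] by simp
  have "mac ?V ?w = \<theta> * total_weight ?V ?w" using m1 m2 tw tpos by simp
  show "\<exists>V w. weighted_digraph V w \<and> total_weight V w > 0 \<and>
                theta V w = \<theta> \<and> mac V w = \<theta> * total_weight V w"
  proof -
    have "weighted_digraph ?V ?w" by (rule gw_digraph) (use l0 in auto)
    thus ?thesis using twpos th \<open>mac ?V ?w = \<theta> * total_weight ?V ?w\<close> by blast
  qed
qed

end
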